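(* Let $G$ and $H$ be graphs. Suppose that for every vertex $v \in V(H)$ there exists a subgraph embedding $\varphi_v$ of $H$ into $G$ that is induced with respect to $v$. Then $G \xrightarrow{\cap} H$.
   Context: All graphs are finite and simple. For graphs $G_1=(V_1,E_1)$, $G_2=(V_2,E_2)$, their intersection is $G_1\cap G_2=(V_1\cap V_2, E_1\cap E_2)$. For a graph $G=(V,E)$ and an injective map $\alpha$ defined on $V$, $G^{\alpha}$ is the graph with vertex set $\{\alpha(v): v\in V\}$ and edge set $\{\{\alpha(v),\alpha(w)\}: \{v,w\}\in E\}$. We write $G\xrightarrow{\cap} H$ ($H$ is a self-intersection, or si-subgraph, of $G$) if there exist $k\ge 1$ and injective maps $\alpha_1,\dots,\alpha_k$ on $V(G)$ with $H=G^{\alpha_1}\cap\cdots\cap G^{\alpha_k}$; when $H$ is only specified up to isomorphism, this means $H$ is isomorphic to such an intersection. A subgraph embedding of $H$ into $G$ is an injective map $\varphi: V(H)\to V(G)$ such that $\varphi(u)\varphi(w)\in E(G)$ whenever $uw\in E(H)$. It is induced with respect to $v\in V(H)$ if $\varphi(N_H(v)) = N_G(\varphi(v))\cap \varphi(V(H))$. *)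

theory Defs
  imports Main
begin

type_synonym 'a graph = "'a set \<times> 'a set set"

abbreviation verts :: "'a graph \<Rightarrow> 'a set" where "verts G \<equiv> fst G"
abbreviation edges :: "'a graph \<Rightarrow> 'a set set" where "edges G \<equiv> snd G"

definition wf_graph :: "'a graph \<Rightarrow> bool" where
  "wf_graph G \<longleftrightarrow> finite (verts G) \<and>
     (\<forall>e\<in>edges G. \<exists>u v. e = {u, v} \<and> u \<noteq> v \<and> u \<in> verts G \<and> v \<in> verts G)"

definition graph_image :: "('a \<Rightarrow> 'c) \<Rightarrow> 'a graph \<Rightarrow> 'c graph" where
  "graph_image \<alpha> G = (\<alpha> ` verts G, (\<lambda>e. \<alpha> ` e) ` edges G)"

definition graph_Inter :: "nat \<Rightarrow> (nat \<Rightarrow> 'c graph) \<Rightarrow> 'c graph" where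
  "graph_Inter k Gs = ((\<Inter>i<k. verts (Gs i)), (\<Inter>i<k. edges (Gs i)))"

definition graph_iso :: "'b graph \<Rightarrow> 'c graph \<Rightarrow> bool" where
  "graph_iso H I \<longleftrightarrow> (\<exists>f. bij_betw f (verts H) (verts I) \<and>
     (\<forall>u\<in>verts H. \<forall>w\<in>verts H. {u, w} \<in> edges H \<longleftrightarrow> {f u, f w} \<in> edges I))"

text \<open>G \<rightarrow>\<inter> H (H up to isomorphism); the maps alpha_i take values in the
  vertex universe 'c, given as a type parameter.\<close>
definition si_subgraph :: "'a graph \<Rightarrow> 'b graph \<Rightarrow> 'c itself \<Rightarrow> bool" where
  "si_subgraph G H (_ :: 'c itself) \<longleftrightarrow>
     (\<exists>k (\<alpha> :: nat \<Rightarrow> 'a \<Rightarrow> 'c). k \<ge> 1 \<and> (\<forall>i<k. inj_on (\<alpha> i) (verts G)) \<and>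
        graph_iso H (graph_Inter k (\<lambda>i. graph_image (\<alpha> i) G)))"

definition nbhd :: "'a graph \<Rightarrow> 'a \<Rightarrow> 'a set" where
  "nbhd G v = {w \<in> verts G. {v, w} \<in> edges G}"

definition subgraph_embedding :: "('b \<Rightarrow> 'a) \<Rightarrow> 'b graph \<Rightarrow> 'a graph \<Rightarrow> bool" where
  "subgraph_embedding \<phi> H G \<longleftrightarrow> inj_on \<phi> (verts H) \<and> \<phi> ` verts H \<subseteq> verts G \<and>
     (\<forall>u\<in>verts H. \<forall>w\<in>verts H. {u, w} \<in> edges H \<longrightarrow> {\<phi> u, \<phi> w} \<in> edges G)"

definition induced_wrt :: "('b \<Rightarrow> 'a) \<Rightarrow> 'b graph \<Rightarrow> 'a graph \<Rightarrow> 'b \<Rightarrow> bool" where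
  "induced_wrt \<phi> H G v \<longleftrightarrow> \<phi> ` nbhd H v = nbhd G (\<phi> v) \<inter> \<phi> ` verts H"

end

theory Submission
  imports Defs "HOL-Library.Nat_Bijection"
begin

theorem mainTheorem1:
  fixes G :: "'a graph" and H :: "'b graph"
  assumes "wf_graph G" and "wf_graph H"
    and "\<forall>v\<in>verts H. \<exists>\<phi>. subgraph_embedding \<phi> H G \<and> induced_wrt \<phi> H G v"
  shows "si_subgraph G H TYPE(nat)"
proof -
  define VG where "VG = verts G"
  define VH where "VH = verts H"
  define m where "m = card VH"
  have finG: "finite VG" and finH: "finite VH"
    using assms(1,2) unfolding wf_graph_def VG_def VH_def by auto
  have wfG: "\<forall>e\<in>edges G. \<exists>u v. e = {u, v} \<and> u \<noteq> v \<and> u \<in> VG \<and> v \<in> VG"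
    using assms(1) unfolding wf_graph_def VG_def by auto
  obtain \<Phi> where Phi: "\<And>v. v \<in> VH \<Longrightarrow> subgraph_embedding (\<Phi> v) H G \<and> induced_wrt (\<Phi> v) H G v"
    using assms(3) unfolding VH_def by metis
  obtain e where e: "bij_betw e {0..<m} VH"
    using ex_bij_betw_nat_finite[OF finH] unfolding m_def by blast
  obtain g where g: "bij_betw g VG {0..<card VG}"
    using ex_bij_betw_finite_nat[OF finG] by blast
  define h where "h = inv_into {0..<m} e"
  have hbij: "bij_betw h VH {0..<m}" unfolding h_def using e by (simp add: bij_betw_inv_into)
  have he: "\<And>u. u \<in> VH \<Longrightarrow> e (h u) = u" unfolding h_def using e
    by (meson bij_betw_inv_into_right)
  have hinj: "inj_on h VH" using hbij bij_betw_def by blast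
  have hlt: "\<And>u. u \<in> VH \<Longrightarrow> h u < m" using hbij bij_betwE by fastforce
  have ginj: "inj_on g VG" using g bij_betw_def by blast
  define k where "k = 2 * max 1 m"
  define \<psi> where "\<psi> i = \<Phi> (e (i div 2))" for i
  define \<alpha> where "\<alpha> i x = (if x \<in> \<psi> i ` VH then 2 * h (inv_into VH (\<psi> i) x)
      else 2 * prod_encode (i, g x) + 1)" for i x
  define f where "f u = 2 * h u" for u
  have psi: "subgraph_embedding (\<psi> i) H G \<and> induced_wrt (\<psi> i) H G (e (i div 2))"
    if "i < k" "VH \<noteq> {}" for i
  proof -
    have "m \<ge> 1" using that finH unfolding m_def by (simp add: card_gt_0_iff Suc_le_eq)
    then have "i div 2 < m" using that(1) unfolding k_def by auto
    then have "e (i div 2) \<in> VH" using e bij_betwE by fastforce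
    then show ?thesis unfolding \<psi>_def using Phi by blast
  qed
  have psiinj: "inj_on (\<psi> i) VH" and psiV: "\<psi> i ` VH \<subseteq> VG"
    if "i < k" "VH \<noteq> {}" for i
    using psi[OF that] unfolding subgraph_embedding_def VH_def VG_def by auto
  have alpha_in: "\<alpha> i (\<psi> i u) = f u" if "i < k" "u \<in> VH" for i u
  proof -
    have "VH \<noteq> {}" using that by auto
    then show ?thesis unfolding \<alpha>_def f_def using that psiinj[of i] by auto
  qed
  have alpha_inj: "inj_on (\<alpha> i) VG" if "i < k" for i
  proof (rule inj_onI)
    fix x y assume x: "x \<in> VG" and y: "y \<in> VG" and eq: "\<alpha> i x = \<alpha> i y"
    show "x = y"
    proof (cases "x \<in> \<psi> i ` VH")
      case True
      then obtain x' where x': "x' \<in> VH" "x = \<psi> i x'" by auto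
      then have ne: "VH \<noteq> {}" by auto
      show ?thesis
      proof (cases "y \<in> \<psi> i ` VH")
        case True
        then obtain y' where y': "y' \<in> VH" "y = \<psi> i y'" by auto
        have "f x' = f y'" using eq alpha_in[OF that x'(1)] alpha_in[OF that y'(1)] x' y' by simp
        then have "x' = y'" using hinj x' y' unfolding f_def by (simp add: inj_on_eq_iff)
        then show ?thesis using x' y' by simp
      next
        case False
        then show ?thesis using eq True unfolding \<alpha>_def by presburger
      qed
    next
      case False
      show ?thesis
      proof (cases "y \<in> \<psi> i ` VH")
        case True
        then show ?thesis using eq False unfolding \<alpha>_def by presburger
      next
        case False2: False
        then have "g x = g y" using eq False unfolding \<alpha>_def by simp
        then show ?thesis using ginj x y by (simp add: inj_on_eq_iff)
      qed
    qed
  qed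
  have k2: "k \<ge> 2" unfolding k_def by simp
  have Vint: "(\<Inter>i<k. \<alpha> i ` VG) = f ` VH"
  proof
    show "f ` VH \<subseteq> (\<Inter>i<k. \<alpha> i ` VG)"
    proof
      fix y assume "y \<in> f ` VH"
      then obtain u where u: "u \<in> VH" "y = f u" by auto
      show "y \<in> (\<Inter>i<k. \<alpha> i ` VG)"
      proof
        fix i assume "i \<in> {..<k}"
        then have i: "i < k" by simp
        have "\<psi> i u \<in> VG" using psiV[OF i] u by blast
        then show "y \<in> \<alpha> i ` VG" using alpha_in[OF i u(1)] u by force
      qed
    qed
  next
    show "(\<Inter>i<k. \<alpha> i ` VG) \<subseteq> f ` VH"
    proof
      fix y assume y: "y \<in> (\<Inter>i<k. \<alpha> i ` VG)"
      then obtain x0 where x0: "x0 \<in> VG" "y = \<alpha> 0 x0" using k2 by force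
      obtain x1 where x1: "x1 \<in> VG" "y = \<alpha> 1 x1" using k2 y by force
      show "y \<in> f ` VH"
      proof (cases "x0 \<in> \<psi> 0 ` VH")
        case True
        then obtain u where u: "u \<in> VH" "x0 = \<psi> 0 u" by auto
        then show ?thesis using alpha_in[of 0 u] k2 x0 by auto
      next
        case False
        then have y0: "y = 2 * prod_encode (0, g x0) + 1" using x0 unfolding \<alpha>_def by simp
        show ?thesis
        proof (cases "x1 \<in> \<psi> 1 ` VH")
          case True
          then have "even y" using x1 unfolding \<alpha>_def by simp
          then show ?thesis using y0 by simp
        next
          case False
          then have "y = 2 * prod_encode (1, g x1) + 1" using x1 unfolding \<alpha>_def by simp
          then show ?thesis using y0 by simp
        qed
      qed
    qed
  qed
  have finj: "inj_on f VH" using hinj unfolding f_def inj_on_def by simp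
  have iso: "graph_iso H (graph_Inter k (\<lambda>i. graph_image (\<alpha> i) G))"
    unfolding graph_iso_def
  proof (intro exI conjI ballI)
    show "bij_betw f (verts H) (verts (graph_Inter k (\<lambda>i. graph_image (\<alpha> i) G)))"
      using Vint finj unfolding graph_Inter_def graph_image_def bij_betw_def VH_def VG_def
      by simp
  next
    fix u w assume u: "u \<in> verts H" and w: "w \<in> verts H"
    then have u': "u \<in> VH" and w': "w \<in> VH" unfolding VH_def by auto
    have E: "edges (graph_Inter k (\<lambda>i. graph_image (\<alpha> i) G)) = (\<Inter>i<k. (\<lambda>e. \<alpha> i ` e) ` edges G)"
      unfolding graph_Inter_def graph_image_def by simp
    show "({u, w} \<in> edges H) = ({f u, f w} \<in> edges (graph_Inter k (\<lambda>i. graph_image (\<alpha> i) G)))"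
      unfolding E
    proof
      assume uw: "{u, w} \<in> edges H"
      show "{f u, f w} \<in> (\<Inter>i<k. (\<lambda>e. \<alpha> i ` e) ` edges G)"
      proof
        fix i assume "i \<in> {..<k}"
        then have i: "i < k" by simp
        have ne: "VH \<noteq> {}" using u' by auto
        have "{\<psi> i u, \<psi> i w} \<in> edges G"
          using psi[OF i ne] u w uw unfolding subgraph_embedding_def by blast
        moreover have "\<alpha> i ` {\<psi> i u, \<psi> i w} = {f u, f w}"
          using alpha_in[OF i u'] alpha_in[OF i w'] by simp
        ultimately show "{f u, f w} \<in> (\<lambda>e. \<alpha> i ` e) ` edges G" by (metis rev_image_eqI)
      qed
    next
      assume fuw: "{f u, f w} \<in> (\<Inter>i<k. (\<lambda>e. \<alpha> i ` e) ` edges G)"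
      define i where "i = 2 * h u"
      have "VH \<noteq> {}" using u' by auto
      then have "m \<ge> 1" using finH unfolding m_def by (simp add: card_gt_0_iff Suc_le_eq)
      then have i: "i < k" using hlt[OF u'] unfolding i_def k_def by auto
      have ediv: "e (i div 2) = u" unfolding i_def using he[OF u'] by simp
      have ne: "VH \<noteq> {}" using u' by auto
      have emb: "subgraph_embedding (\<psi> i) H G" and ind: "induced_wrt (\<psi> i) H G u"
        using psi[OF i ne] ediv by auto
      obtain \<epsilon> where eps: "\<epsilon> \<in> edges G" "\<alpha> i ` \<epsilon> = {f u, f w}" proof -
        have "{f u, f w} \<in> (\<lambda>e. \<alpha> i ` e) ` edges G" using fuw i by blast
        then show ?thesis using that by (metis imageE)
      qed
      obtain x y where xy: "\<epsilon> = {x, y}" "x \<noteq> y" "x \<in> VG" "y \<in> VG" using wfG eps(1) by blast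
      have xin: "x \<in> \<psi> i ` VH"
      proof (rule ccontr)
        assume "x \<notin> \<psi> i ` VH"
        then have "odd (\<alpha> i x)" unfolding \<alpha>_def by simp
        moreover have "\<alpha> i x \<in> {f u, f w}" using eps(2) xy by auto
        ultimately show False unfolding f_def by auto
      qed
      have yin: "y \<in> \<psi> i ` VH"
      proof (rule ccontr)
        assume "y \<notin> \<psi> i ` VH"
        then have "odd (\<alpha> i y)" unfolding \<alpha>_def by simp
        moreover have "\<alpha> i y \<in> {f u, f w}" using eps(2) xy by auto
        ultimately show False unfolding f_def by auto
      qed
      obtain x' where x': "x' \<in> VH" "x = \<psi> i x'" using xin by auto
      obtain y' where y': "y' \<in> VH" "y = \<psi> i y'" using yin by auto
      have "{f x', f y'} = {f u, f w}" using eps(2) xy x' y' alpha_in[OF i x'(1)] alpha_in[OF i y'(1)] by simp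
      then have "f ` {x', y'} = f ` {u, w}" by simp
      then have xyuw: "{x', y'} = {u, w}"
        using inj_on_image_eq_iff[OF finj, of "{x', y'}" "{u, w}"] x' y' u' w' by blast
      have "{\<psi> i u, \<psi> i w} \<in> edges G" using eps(1) xy x' y' xyuw
        by (metis image_insert image_empty)
      moreover have "\<psi> i w \<in> VG" using psiV[OF i ne] w' by blast
      ultimately have "\<psi> i w \<in> nbhd G (\<psi> i u) \<inter> \<psi> i ` verts H"
        unfolding nbhd_def VG_def using w by auto
      then have "\<psi> i w \<in> \<psi> i ` nbhd H u" using ind unfolding induced_wrt_def by simp
      then obtain w2 where w2: "w2 \<in> nbhd H u" "\<psi> i w2 = \<psi> i w" by auto
      have "w2 \<in> VH" using w2 unfolding nbhd_def VH_def by auto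
      then have "w2 = w" using psiinj[OF i ne] w' w2(2) by (simp add: inj_on_eq_iff)
      then show "{u, w} \<in> edges H" using w2 unfolding nbhd_def by auto
    qed
  qed
  show ?thesis unfolding si_subgraph_def
    using k2 alpha_inj iso unfolding VG_def by (intro exI[of _ k] exI[of _ \<alpha>]) auto
qed

end
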